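(* Let $g:\mathbb{Z}_{\ge0}\to\mathbb{R}$ satisfy $g(0)>0$ and $g(k)\le 0$ for all $k\ge1$ (an opponent process with $\tau_0=1$). Let $y_{\min}\in\mathbb{R}$, let gains satisfy $0<K_+\le g(0)^{-1}\le K_-$, and let $\delta>0$. Let $(y^{\mathrm{nat}}_t)_{t\ge0}$ be a real sequence and $u_0\ge0$ an initial dose such that $y_1:=g(0)u_0+y^{\mathrm{nat}}_1\ge y_{\min}$, and suppose $$y^{\mathrm{nat}}_{t+1}\ge y^{\mathrm{nat}}_t-g(t)\,u_0+\frac{\delta}{t}\qquad\text{for all }t\ge1.$$ For $t\ge1$ define $$u_t=\max\bigl\{0,\ u_{t-1}-K_+(y_t-y_{\min})_+-K_-(y_t-y_{\min})_-\bigr\},\qquad y_{t+1}=\sum_{k=0}^{t}g(k)\,u_{t-k}+y^{\mathrm{nat}}_{t+1},$$ where $(x)_+=\max(x,0)$, $(x)_-=\min(x,0)$. Then: (i) $u_t\le u_{t-1}$ for all $t\ge1$; (ii) $y_t\ge y_{\min}$ for all $t\ge1$; (iii) there exists a finite $T_0$ such that $u_t=0$ for all $t\ge T_0$.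
   Context: An opponent process with switching time $\tau_0=1$ is an impulse response $g$ with $g(0)>0$ and $g(\tau)\le0$ for all $\tau\ge1$. Doses are nonnegative. *)

theory Defs
  imports Complex_Main
begin

definition pos_part :: "real \<Rightarrow> real" where "pos_part x = max x 0"
definition neg_part :: "real \<Rightarrow> real" where "neg_part x = min x 0"

end

theory Submission
  imports Defs "HOL-Analysis.Harmonic_Numbers"
begin

theorem proposition2:
  fixes g ynat u y :: "nat \<Rightarrow> real" and ymin Kp Km \<delta> :: real
  assumes g0: "g 0 > 0"
    and gneg: "\<forall>k\<ge>1. g k \<le> 0"
    and Kp: "0 < Kp" "Kp \<le> 1 / g 0" "1 / g 0 \<le> Km"
    and delta: "\<delta> > 0"
    and u0: "u 0 \<ge> 0"
    and y1: "y 1 = g 0 * u 0 + ynat 1"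
    and y1_ge: "y 1 \<ge> ymin"
    and ynat: "\<forall>t\<ge>1. ynat (t + 1) \<ge> ynat t - g t * u 0 + \<delta> / real t"
    and u_rec: "\<forall>t\<ge>1. u t = max 0 (u (t - 1) - Kp * pos_part (y t - ymin) - Km * neg_part (y t - ymin))"
    and y_rec: "\<forall>t\<ge>1. y (t + 1) = (\<Sum>k=0..t. g k * u (t - k)) + ynat (t + 1)"
  shows "(\<forall>t\<ge>1. u t \<le> u (t - 1)) \<and> (\<forall>t\<ge>1. y t \<ge> ymin) \<and> (\<exists>T0. \<forall>t\<ge>T0. u t = 0)"
proof -
  have unn: "u s \<ge> 0" for s
    using u0 u_rec by (cases s) auto
  have gK: "g 0 * Kp \<le> 1" using Kp g0 by (simp add: field_simps)
  have mono: "u s \<le> u (s-1) \<and> u s \<ge> u (s-1) - Kp * (y s - ymin)"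
    if "s \<ge> 1" "y s \<ge> ymin" for s
  proof -
    have "pos_part (y s - ymin) = y s - ymin" "neg_part (y s - ymin) = 0"
      using that by (auto simp: pos_part_def neg_part_def)
    hence "u s = max 0 (u (s-1) - Kp * (y s - ymin))" using u_rec that by simp
    thus ?thesis using unn[of "s-1"] Kp that by (simp add: mult_nonneg_nonneg)
  qed
  have yform: "y (Suc m) = (\<Sum>k=0..m. g k * u (m - k)) + ynat (Suc m)" for m
  proof (cases m)
    case 0 then show ?thesis using y1 by simp
  next
    case (Suc n) then show ?thesis using y_rec[rule_format, of m] by (simp del: sum.atLeast0_atMost_Suc)
  qed
  have step: "y (Suc (Suc m)) \<ge> ymin + \<delta> / real (Suc m)"
    if H: "\<forall>s. 1 \<le> s \<and> s \<le> Suc m \<longrightarrow> y s \<ge> ymin" for m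
  proof -
    have A: "(\<Sum>k=0..Suc m. g k * u (Suc m - k)) = g 0 * u (Suc m) + (\<Sum>k=1..m. g k * u (Suc m - k)) + g (Suc m) * u 0"
    proof -
      have "(\<Sum>k=0..Suc m. g k * u (Suc m - k)) = g 0 * u (Suc m) + (\<Sum>k=Suc 0..Suc m. g k * u (Suc m - k))"
        by (subst sum.atLeast_Suc_atMost) auto
      also have "(\<Sum>k=Suc 0..Suc m. g k * u (Suc m - k)) = (\<Sum>k=1..m. g k * u (Suc m - k)) + g (Suc m) * u 0"
        by (subst sum.cl_ivl_Suc) auto
      finally show ?thesis by simp
    qed
    have B: "(\<Sum>k=0..m. g k * u (m - k)) = g 0 * u m + (\<Sum>k=1..m. g k * u (m - k))"
      by (subst sum.atLeast_Suc_atMost) auto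
    have C: "(\<Sum>k=1..m. g k * u (Suc m - k)) \<ge> (\<Sum>k=1..m. g k * u (m - k))"
    proof (rule sum_mono)
      fix k assume k: "k \<in> {1..m}"
      have "u (Suc m - k) \<le> u (Suc m - k - 1)"
        using mono[of "Suc m - k"] H k by auto
      moreover have "Suc m - k - 1 = m - k" by simp
      ultimately have "u (Suc m - k) \<le> u (m - k)" by simp
      moreover have "g k \<le> 0" using gneg k by auto
      ultimately show "g k * u (m - k) \<le> g k * u (Suc m - k)"
        by (simp add: mult_left_mono_neg)
    qed
    have D: "ynat (Suc (Suc m)) \<ge> ynat (Suc m) - g (Suc m) * u 0 + \<delta> / real (Suc m)"
      using ynat[rule_format, of "Suc m"] by simp
    have E: "u (Suc m) \<ge> u m - Kp * (y (Suc m) - ymin)"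
      using mono[of "Suc m"] H by auto
    have F: "g 0 * (u (Suc m) - u m) \<ge> - ((g 0 * Kp) * (y (Suc m) - ymin))"
    proof -
      have "g 0 * (u (Suc m) - u m) \<ge> g 0 * (- Kp * (y (Suc m) - ymin))"
        using E g0 by (intro mult_left_mono) auto
      thus ?thesis by (simp add: algebra_simps)
    qed
    have G: "(g 0 * Kp) * (y (Suc m) - ymin) \<le> y (Suc m) - ymin"
      using gK H by (simp add: mult_left_le_one_le Kp g0 less_imp_le)
    have "y (Suc (Suc m)) - y (Suc m) \<ge> g 0 * (u (Suc m) - u m) + \<delta> / real (Suc m)"
      using yform[of "Suc m"] yform[of m] A B C D by (simp add: algebra_simps)
    thus ?thesis using F G by linarith
  qed
  have Yall: "\<forall>s. 1 \<le> s \<and> s \<le> Suc n \<longrightarrow> y s \<ge> ymin" for n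
  proof (induction n)
    case 0 then show ?case using y1_ge by (auto simp: le_Suc_eq)
  next
    case (Suc n)
    have "y (Suc (Suc n)) \<ge> ymin" using step[OF Suc] delta by (smt (verit) divide_pos_pos of_nat_0_less_iff zero_less_Suc)
    then show ?case using Suc by (auto simp: le_Suc_eq)
  qed
  have Y: "y t \<ge> ymin" if "t \<ge> 1" for t using Yall[of t] that by auto
  have M: "u t \<le> u (t-1)" if "t \<ge> 1" for t using mono[OF that Y[OF that]] by auto
  have bound: "u (Suc m) \<le> max 0 (u 1 - Kp * \<delta> * harm m)" for m
  proof (induction m)
    case 0 then show ?case by (simp add: harm_def)
  next
    case (Suc m)
    have s: "y (Suc (Suc m)) \<ge> ymin + \<delta> / real (Suc m)" using step Yall by blast
    have "u (Suc (Suc m)) \<ge> 0" by (rule unn)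
    have e: "u (Suc (Suc m)) = max 0 (u (Suc m) - Kp * (y (Suc (Suc m)) - ymin))"
    proof -
      have "pos_part (y (Suc (Suc m)) - ymin) = y (Suc (Suc m)) - ymin" "neg_part (y (Suc (Suc m)) - ymin) = 0"
        using Y[of "Suc (Suc m)"] by (auto simp: pos_part_def neg_part_def)
      thus ?thesis using u_rec[rule_format, of "Suc (Suc m)"] by simp
    qed
    have "Kp * (y (Suc (Suc m)) - ymin) \<ge> Kp * (\<delta> / real (Suc m))"
      using s Kp by (intro mult_left_mono) auto
    hence "u (Suc (Suc m)) \<le> max 0 (u (Suc m) - Kp * \<delta> / real (Suc m))"
      using e by auto
    moreover have "Kp * \<delta> * harm (Suc m) = Kp * \<delta> * harm m + Kp * \<delta> / real (Suc m)"
      by (simp add: harm_Suc algebra_simps divide_inverse)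
    moreover have "Kp * \<delta> / real (Suc m) \<ge> 0" using Kp delta by simp
    ultimately show ?case using Suc.IH by (smt (verit))
  qed
  have ev: "eventually (\<lambda>n. harm n > u 1 / (Kp * \<delta>)) sequentially"
    using harm_at_top filterlim_at_top_dense by blast
  then obtain N where N: "\<And>n. n \<ge> N \<Longrightarrow> (harm n :: real) > u 1 / (Kp * \<delta>)"
    by (auto simp: eventually_sequentially)
  have Z: "\<forall>t\<ge>Suc N. u t = 0"
  proof (intro allI impI)
    fix t assume t: "Suc N \<le> t"
    then obtain m where m: "t = Suc m" "m \<ge> N" by (cases t) auto
    have "harm m > u 1 / (Kp * \<delta>)" using N m by auto
    hence "Kp * \<delta> * harm m > u 1" using Kp delta by (simp add: field_simps)
    hence "u (Suc m) \<le> 0" using bound[of m] by auto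
    thus "u t = 0" using unn[of t] m by auto
  qed
  show ?thesis using M Y Z by blast
qed

end
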